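(* For any locally-fixable problem on a dynamic graph $G=(V,E)$, if every node is valid just before the insertion or deletion of an edge $(u,v)$, then after the update a solution in which every node is valid can be obtained by changing the states of at most two nodes, and only the states of the endpoints $u$ and $v$ are changed.
   Context: A graph problem is specified by a set of states $S_v$ for each node $v$; each node picks a state $s(v)\in S_v$. It is locally-fixable if for each node $v$ there is a validity function $f_v$ deciding whether $v$ is valid, such that (i) the output of $f_v$ depends only on the states of $v$ and its neighbors, and (ii) for any assignment of states in which $v$ is invalid, one can change only the state of $v$ (keeping all neighbors' states fixed) so that $v$ becomes valid and no previously valid neighbor of $v$ becomes invalid. A solution is feasible iff all nodes are valid. *)

theory Defs
  imports Main
begin

definition graph :: "'v set \<Rightarrow> ('v \<Rightarrow> 'v \<Rightarrow> bool) \<Rightarrow> bool" where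
  "graph V E \<longleftrightarrow> (\<forall>x y. E x y \<longrightarrow> x \<in> V \<and> y \<in> V \<and> x \<noteq> y \<and> E y x)"

definition assignment :: "'v set \<Rightarrow> ('v \<Rightarrow> 's set) \<Rightarrow> ('v \<Rightarrow> 's) \<Rightarrow> bool" where
  "assignment V S s \<longleftrightarrow> (\<forall>w\<in>V. s w \<in> S w)"

text \<open>A graph problem on a dynamic graph with node set V: state sets S, and a validity
  predicate valid E v s (validity function f_v of node v in graph E under assignment s).
  Locality (i): validity of v depends only on the states of v and of its neighbours
  (and thus coincides in two graphs where v has the same neighbourhood).\<close>
definition locally_fixable ::
  "'v set \<Rightarrow> ('v \<Rightarrow> 's set) \<Rightarrow> (('v \<Rightarrow> 'v \<Rightarrow> bool) \<Rightarrow> 'v \<Rightarrow> ('v \<Rightarrow> 's) \<Rightarrow> bool) \<Rightarrow> bool" where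
  "locally_fixable V S valid \<longleftrightarrow>
     (\<forall>E E' v s s'. graph V E \<and> graph V E' \<and> v \<in> V \<and>
        assignment V S s \<and> assignment V S s' \<and>
        (\<forall>w. E v w \<longleftrightarrow> E' v w) \<and> s v = s' v \<and> (\<forall>w. E v w \<longrightarrow> s w = s' w)
        \<longrightarrow> valid E v s = valid E' v s') \<and>
     (\<forall>E v s. graph V E \<and> v \<in> V \<and> assignment V S s \<and> \<not> valid E v s \<longrightarrow>
        (\<exists>x\<in>S v. valid E v (s(v := x)) \<and>
           (\<forall>w\<in>V. E v w \<and> valid E w s \<longrightarrow> valid E w (s(v := x)))))"

definition edge_insert :: "('v \<Rightarrow> 'v \<Rightarrow> bool) \<Rightarrow> 'v \<Rightarrow> 'v \<Rightarrow> ('v \<Rightarrow> 'v \<Rightarrow> bool)" where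
  "edge_insert E u v = (\<lambda>x y. E x y \<or> (x = u \<and> y = v) \<or> (x = v \<and> y = u))"

definition edge_delete :: "('v \<Rightarrow> 'v \<Rightarrow> bool) \<Rightarrow> 'v \<Rightarrow> 'v \<Rightarrow> ('v \<Rightarrow> 'v \<Rightarrow> bool)" where
  "edge_delete E u v = (\<lambda>x y. E x y \<and> \<not> ((x = u \<and> y = v) \<or> (x = v \<and> y = u)))"

end

theory Submission
  imports Defs
begin

lemma fix_one:
  assumes lf: "locally_fixable V S valid" and g: "graph V E" and a: "assignment V S s"
    and z: "z \<in> V" and val: "\<forall>w\<in>V - ({z} \<union> B). valid E w s"
  shows "\<exists>s'. assignment V S s' \<and> (\<forall>w\<in>V - B. valid E w s') \<and> (\<forall>w. s' w \<noteq> s w \<longrightarrow> w = z)"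
proof (cases "valid E z s")
  case True
  then show ?thesis using a val by (intro exI[of _ s]) auto
next
  case False
  have loc: "\<And>E E' v s s'. graph V E \<Longrightarrow> graph V E' \<Longrightarrow> v \<in> V \<Longrightarrow>
        assignment V S s \<Longrightarrow> assignment V S s' \<Longrightarrow>
        (\<forall>w. E v w \<longleftrightarrow> E' v w) \<Longrightarrow> s v = s' v \<Longrightarrow> (\<forall>w. E v w \<longrightarrow> s w = s' w)
        \<Longrightarrow> valid E v s = valid E' v s'" using lf unfolding locally_fixable_def by blast
  from lf g z a False obtain x where x: "x \<in> S z" "valid E z (s(z := x))"
    "\<forall>w\<in>V. E z w \<and> valid E w s \<longrightarrow> valid E w (s(z := x))"
    unfolding locally_fixable_def by blast
  have a': "assignment V S (s(z := x))" using a x(1) unfolding assignment_def by auto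
  have "\<forall>w\<in>V - B. valid E w (s(z := x))"
  proof
    fix w assume w: "w \<in> V - B"
    show "valid E w (s(z := x))"
    proof (cases "w = z")
      case True then show ?thesis using x by simp
    next
      case wz: False
      then have vw: "valid E w s" using val w by auto
      show ?thesis
      proof (cases "E z w")
        case True then show ?thesis using x(3) w vw by auto
      next
        case False
        then have "\<not> E w z" using g unfolding graph_def by blast
        then have "valid E w s = valid E w (s(z := x))"
          using loc[OF g g _ a a'] w wz by auto
        then show ?thesis using vw by simp
      qed
    qed
  qed
  then show ?thesis using a' by (intro exI[of _ "s(z := x)"]) auto
qed

theorem lemma11:
  fixes V :: "'v set" and S :: "'v \<Rightarrow> 's set"
    and valid :: "('v \<Rightarrow> 'v \<Rightarrow> bool) \<Rightarrow> 'v \<Rightarrow> ('v \<Rightarrow> 's) \<Rightarrow> bool"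
    and E E' :: "'v \<Rightarrow> 'v \<Rightarrow> bool" and s :: "'v \<Rightarrow> 's" and u v :: 'v
  assumes "locally_fixable V S valid"
    and "graph V E"
    and "u \<in> V" and "v \<in> V" and "u \<noteq> v"
    and "E' = edge_insert E u v \<or> E' = edge_delete E u v"
    and "assignment V S s"
    and "\<forall>w\<in>V. valid E w s"
  shows "\<exists>s'. assignment V S s' \<and> (\<forall>w\<in>V. valid E' w s') \<and>
             (\<forall>w. s' w \<noteq> s w \<longrightarrow> w = u \<or> w = v) \<and>
             card {w. s' w \<noteq> s w} \<le> 2"
proof -
  note lf = assms(1)
  have g': "graph V E'"
    using assms(6)
  proof
    assume "E' = edge_insert E u v" then show ?thesis
      using assms(2-5) unfolding graph_def edge_insert_def by blast
  next
    assume "E' = edge_delete E u v" then show ?thesis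
      using assms(2-5) unfolding graph_def edge_delete_def by blast
  qed
  have loc: "\<And>E E' v s s'. graph V E \<Longrightarrow> graph V E' \<Longrightarrow> v \<in> V \<Longrightarrow>
        assignment V S s \<Longrightarrow> assignment V S s' \<Longrightarrow>
        (\<forall>w. E v w \<longleftrightarrow> E' v w) \<Longrightarrow> s v = s' v \<Longrightarrow> (\<forall>w. E v w \<longrightarrow> s w = s' w)
        \<Longrightarrow> valid E v s = valid E' v s'" using lf unfolding locally_fixable_def by blast
  have v0: "\<forall>w\<in>V - ({u} \<union> {v}). valid E' w s"
  proof
    fix w assume w: "w \<in> V - ({u} \<union> {v})"
    have "\<forall>x. E w x \<longleftrightarrow> E' w x" using w assms(6)
      unfolding edge_insert_def edge_delete_def by auto
    then have "valid E w s = valid E' w s" using loc[OF assms(2) g' _ assms(7) assms(7)] w by auto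
    then show "valid E' w s" using assms(8) w by auto
  qed
  obtain s1 where s1: "assignment V S s1" "\<forall>w\<in>V - {v}. valid E' w s1" "\<forall>w. s1 w \<noteq> s w \<longrightarrow> w = u"
    using fix_one[OF lf g' assms(7) assms(3) v0] by blast
  have "\<forall>w\<in>V - ({v} \<union> {}). valid E' w s1" using s1(2) by simp
  then obtain s2 where s2: "assignment V S s2" "\<forall>w\<in>V - {}. valid E' w s2" "\<forall>w. s2 w \<noteq> s1 w \<longrightarrow> w = v"
    using fix_one[OF lf g' s1(1) assms(4)] by blast
  have sub: "{w. s2 w \<noteq> s w} \<subseteq> {u, v}"
  proof
    fix w assume "w \<in> {w. s2 w \<noteq> s w}"
    then have "s2 w \<noteq> s1 w \<or> s1 w \<noteq> s w" by auto
    then show "w \<in> {u, v}" using s1(3) s2(3) by blast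
  qed
  have "card {w. s2 w \<noteq> s w} \<le> card {u, v}" by (rule card_mono[OF _ sub]) simp
  also have "\<dots> \<le> 2" by (simp add: card_insert_if)
  finally show ?thesis using s2 sub by (intro exI[of _ s2]) auto
qed

end
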